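(* Let $N$ be a finite set with $|N|\ge 2$. There is a one-to-one correspondence between SE faces of $P_N$ and faces of $C_N$ which preserves inclusion: for SE faces $F_1,F_2$ of $P_N$ with corresponding faces $\bar F_1,\bar F_2$ of $C_N$, $F_1\subseteq F_2$ iff $\bar F_1\subseteq\bar F_2$. Specifically, the SE face of $P_N$ given by a valid inequality $\langle o,\eta\rangle\le u$ with SE objective $o$ corresponds to the face of $C_N$ given by the (valid) inequality $\langle\tau_o,c\rangle\le u$, and the sets of graphs identified with corresponding faces coincide: $\{G\in\mathrm{DAG}(N):\eta_G\in F\}=\{G\in\mathrm{DAG}(N):c_G\in\bar F\}$.
   Context: $\mathrm{DAG}(N)$ is the set of acyclic directed graphs over $N$; $\mathrm{pa}_G(a)$ is the parent set of $a$ in $G$; $G\sim H$ (Markov equivalence) means same adjacencies and same immoralities (induced $a\to c\leftarrow b$, $a,b$ non-adjacent). $\Upsilon=\{(a|B): a\in N,\ \emptyset\neq B\subseteq N\setminus\{a\}\}$; $\eta_G\in\mathbb{R}^{\Upsilon}$ has $\eta_G(a|B)=1$ if $B=\mathrm{pa}_G(a)$, else $0$; $P_N=\mathrm{conv}\{\eta_G:G\in\mathrm{DAG}(N)\}$. $\mathcal{S}=\{S\subseteq N:|S|\ge2\}$; $c_\eta(S)=\sum_{a\in S}\sum_{B:\,S\setminus\{a\}\subseteq B\subseteq N\setminus\{a\}}\eta(a|B)$; $c_G=c_{\eta_G}$; $C_N=\mathrm{conv}\{c_G:G\in\mathrm{DAG}(N)\}$ is the characteristic-imset polytope. $o$ is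 an SE objective if $\langle o,\eta_G\rangle=\langle o,\eta_H\rangle$ whenever $G\sim H$; a face $F$ of $P_N$ is SE if $F=\{v\in P_N:\langle o,v\rangle=u\}$ for some SE objective $o$ and $u$ with $\langle o,v\rangle\le u$ on $P_N$. For an SE objective $o$, $\tau_o\in\mathbb{R}^{\mathcal{S}}$ is $\tau_o(T)=\sum_{\emptyset\neq K\subseteq T\setminus\{b\}}(-1)^{|T\setminus\{b\}|-|K|}o(b|K)$ for any $b\in T$ (independent of $b$), with $o(b|\emptyset)=0$. *)

theory Defs
  imports "HOL-Analysis.Analysis"
begin

definition DAGs :: "'a set \<Rightarrow> ('a \<times> 'a) set set" where
  "DAGs N = {G. G \<subseteq> N \<times> N \<and> acyclic G}"

definition pa :: "('a \<times> 'a) set \<Rightarrow> 'a \<Rightarrow> 'a set" where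
  "pa G a = {b. (b, a) \<in> G}"

definition adj :: "('a \<times> 'a) set \<Rightarrow> 'a \<Rightarrow> 'a \<Rightarrow> bool" where
  "adj G a b \<longleftrightarrow> (a, b) \<in> G \<or> (b, a) \<in> G"

definition immorality :: "('a \<times> 'a) set \<Rightarrow> 'a \<Rightarrow> 'a \<Rightarrow> 'a \<Rightarrow> bool" where
  "immorality G a c b \<longleftrightarrow> (a, c) \<in> G \<and> (b, c) \<in> G \<and> a \<noteq> b \<and> \<not> adj G a b"

definition markov_equiv :: "('a \<times> 'a) set \<Rightarrow> ('a \<times> 'a) set \<Rightarrow> bool" where
  "markov_equiv G H \<longleftrightarrow>
     (\<forall>a b. adj G a b = adj H a b) \<and> (\<forall>a c b. immorality G a c b = immorality H a c b)"

definition Ups :: "'a set \<Rightarrow> ('a \<times> 'a set) set" where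
  "Ups N = {(a, B). a \<in> N \<and> B \<noteq> {} \<and> B \<subseteq> N - {a}}"

text \<open>Vectors in R^Upsilon are functions ('a \<times> 'a set) \<Rightarrow> real; only coordinates in Ups N matter.\<close>
definition eta :: "'a set \<Rightarrow> ('a \<times> 'a) set \<Rightarrow> ('a \<times> 'a set) \<Rightarrow> real" where
  "eta N G = (\<lambda>(a, B). if (a, B) \<in> Ups N \<and> B = pa G a then 1 else 0)"

definition ipU :: "'a set \<Rightarrow> ('a \<times> 'a set \<Rightarrow> real) \<Rightarrow> ('a \<times> 'a set \<Rightarrow> real) \<Rightarrow> real" where
  "ipU N ob v = (\<Sum>i\<in>Ups N. ob i * v i)"

definition conv :: "('i \<Rightarrow> real) set \<Rightarrow> ('i \<Rightarrow> real) set" where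
  "conv V = {x. \<exists>w. (\<forall>v\<in>V. w v \<ge> 0) \<and> (\<Sum>v\<in>V. w v) = 1 \<and> x = (\<lambda>i. \<Sum>v\<in>V. w v * v i)}"

definition P_poly :: "'a set \<Rightarrow> ('a \<times> 'a set \<Rightarrow> real) set" where
  "P_poly N = conv (eta N ` DAGs N)"

definition Ssets :: "'a set \<Rightarrow> 'a set set" where
  "Ssets N = {S. S \<subseteq> N \<and> card S \<ge> 2}"

definition c_eta :: "'a set \<Rightarrow> ('a \<times> 'a set \<Rightarrow> real) \<Rightarrow> 'a set \<Rightarrow> real" where
  "c_eta N v = (\<lambda>S. if S \<in> Ssets N then
      (\<Sum>a\<in>S. \<Sum>B\<in>{B. S - {a} \<subseteq> B \<and> B \<subseteq> N - {a}}. v (a, B)) else 0)"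

definition cG :: "'a set \<Rightarrow> ('a \<times> 'a) set \<Rightarrow> 'a set \<Rightarrow> real" where
  "cG N G = c_eta N (eta N G)"

definition C_poly :: "'a set \<Rightarrow> ('a set \<Rightarrow> real) set" where
  "C_poly N = conv (cG N ` DAGs N)"

definition ipS :: "'a set \<Rightarrow> ('a set \<Rightarrow> real) \<Rightarrow> ('a set \<Rightarrow> real) \<Rightarrow> real" where
  "ipS N t c = (\<Sum>S\<in>Ssets N. t S * c S)"

definition SE_objective :: "'a set \<Rightarrow> ('a \<times> 'a set \<Rightarrow> real) \<Rightarrow> bool" where
  "SE_objective N ob \<longleftrightarrow> (\<forall>G\<in>DAGs N. \<forall>H\<in>DAGs N.
      markov_equiv G H \<longrightarrow> ipU N ob (eta N G) = ipU N ob (eta N H))"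

definition valid_P :: "'a set \<Rightarrow> ('a \<times> 'a set \<Rightarrow> real) \<Rightarrow> real \<Rightarrow> bool" where
  "valid_P N ob u \<longleftrightarrow> (\<forall>v\<in>P_poly N. ipU N ob v \<le> u)"

definition face_P :: "'a set \<Rightarrow> ('a \<times> 'a set \<Rightarrow> real) \<Rightarrow> real \<Rightarrow> ('a \<times> 'a set \<Rightarrow> real) set" where
  "face_P N ob u = {v\<in>P_poly N. ipU N ob v = u}"

definition SE_face :: "'a set \<Rightarrow> ('a \<times> 'a set \<Rightarrow> real) set \<Rightarrow> bool" where
  "SE_face N F \<longleftrightarrow> (\<exists>ob u. SE_objective N ob \<and> valid_P N ob u \<and> F = face_P N ob u)"

definition valid_C :: "'a set \<Rightarrow> ('a set \<Rightarrow> real) \<Rightarrow> real \<Rightarrow> bool" where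
  "valid_C N t u \<longleftrightarrow> (\<forall>c\<in>C_poly N. ipS N t c \<le> u)"

definition face_C :: "'a set \<Rightarrow> ('a set \<Rightarrow> real) \<Rightarrow> real \<Rightarrow> ('a set \<Rightarrow> real) set" where
  "face_C N t u = {c\<in>C_poly N. ipS N t c = u}"

text \<open>Faces of C_N: sets cut out by valid linear inequalities (includes the empty face and C_N).\<close>
definition is_face_C :: "'a set \<Rightarrow> ('a set \<Rightarrow> real) set \<Rightarrow> bool" where
  "is_face_C N F \<longleftrightarrow> (\<exists>t u. valid_C N t u \<and> F = face_C N t u)"

text \<open>tau_o(T), computed with an arbitrarily chosen b in T (independent of b for SE objectives).\<close>
definition tau :: "('a \<times> 'a set \<Rightarrow> real) \<Rightarrow> 'a set \<Rightarrow> real" where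
  "tau ob T = (let b = (SOME b. b \<in> T) in
      (\<Sum>K\<in>{K. K \<noteq> {} \<and> K \<subseteq> T - {b}}. (-1::real) ^ (card (T - {b}) - card K) * ob (b, K)))"

end

theory Submission
  imports Defs
begin


definition fo :: "('a \<times> 'a set \<Rightarrow> real) \<Rightarrow> 'a \<Rightarrow> 'a set \<Rightarrow> real" where
  "fo ob a L = (if L = {} then 0 else ob (a, L))"

definition mo :: "('a \<times> 'a set \<Rightarrow> real) \<Rightarrow> 'a \<Rightarrow> 'a set \<Rightarrow> real" where
  "mo ob a K = (\<Sum>L\<in>Pow K. (-1::real) ^ (card K - card L) * fo ob a L)"

lemma mobius:
  assumes "finite B"
  shows "(\<Sum>K\<in>Pow B. mo ob a K) = fo ob a B"
proof -
  define g where "g S = (\<Sum>T\<in>Pow S. (-1::real) ^ card T * fo ob a T)" for S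
  have e: "fo ob a B = (\<Sum>T\<in>Pow B. (-1) ^ card T * g T)"
    by (rule inclusion_exclusion_symmetric) (auto simp: g_def assms)
  have "mo ob a K = (-1) ^ card K * g K" if "K \<in> Pow B" for K
  proof -
    have fK: "finite K" using that assms finite_subset by auto
    have "(-1) ^ card K * g K = (\<Sum>L\<in>Pow K. (-1::real) ^ (card K + card L) * fo ob a L)"
      by (simp add: g_def sum_distrib_left power_add mult.assoc)
    also have "\<dots> = mo ob a K" unfolding mo_def
      by (rule sum.cong) (auto simp: fK card_mono neg_one_power_add_eq_neg_one_power_diff)
    finally show ?thesis by simp
  qed
  then show ?thesis using e by simp
qed

lemma tau_mo_aux:
  assumes "finite X"
  shows "(\<Sum>K\<in>{K. K \<noteq> {} \<and> K \<subseteq> X}. (-1::real) ^ (card X - card K) * ob (b, K)) = mo ob b X"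
  unfolding mo_def
  by (rule sum.mono_neutral_cong_left) (auto simp: assms fo_def)

lemma tau_mo: "finite T \<Longrightarrow> tau ob T = mo ob (SOME b. b \<in> T) (T - {SOME b. b \<in> T})"
  unfolding tau_def Let_def by (rule tau_mo_aux) auto

lemma split_mo:
  assumes "finite R" "b \<notin> R"
  shows "mo ob a (insert b R) = (\<Sum>L\<in>Pow R. (-1) ^ (card R - card L) * (fo ob a (insert b L) - fo ob a L))"
proof -
  have inj: "inj_on (insert b) (Pow R)" using assms(2) by (auto simp: inj_on_def)
  have dis: "Pow R \<inter> insert b ` Pow R = {}" using assms(2) by auto
  have fin: "finite (Pow R)" using assms by simp
  have cR: "card (insert b R) = Suc (card R)" using assms by simp
  have "mo ob a (insert b R) = (\<Sum>L\<in>Pow R. (-1::real) ^ (Suc (card R) - card L) * fo ob a L)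
      + (\<Sum>L\<in>insert b ` Pow R. (-1::real) ^ (Suc (card R) - card L) * fo ob a L)"
    unfolding mo_def Pow_insert cR by (rule sum.union_disjoint) (use fin dis in auto)
  also have "(\<Sum>L\<in>insert b ` Pow R. (-1::real) ^ (Suc (card R) - card L) * fo ob a L)
     = (\<Sum>L\<in>Pow R. (-1::real) ^ (card R - card L) * fo ob a (insert b L))"
  proof (subst sum.reindex[OF inj], rule sum.cong)
    fix L assume "L \<in> Pow R"
    then have "card (insert b L) = Suc (card L)" using assms finite_subset by (auto intro!: card_insert_disjoint)
    then show "((\<lambda>L. (- 1) ^ (Suc (card R) - card L) * fo ob a L) \<circ> insert b) L =
         (- 1) ^ (card R - card L) * fo ob a (insert b L)" by simp
  qed simp
  also have "(\<Sum>L\<in>Pow R. (-1::real) ^ (Suc (card R) - card L) * fo ob a L)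
     = (\<Sum>L\<in>Pow R. - ((-1::real) ^ (card R - card L) * fo ob a L))"
  proof (rule sum.cong)
    fix L assume "L \<in> Pow R"
    then have "card L \<le> card R" using assms by (auto intro: card_mono)
    then have "Suc (card R) - card L = Suc (card R - card L)" by simp
    then show "(-1::real) ^ (Suc (card R) - card L) * fo ob a L = - ((-1::real) ^ (card R - card L) * fo ob a L)"
      by simp
  qed simp
  finally show ?thesis by (simp add: sum_negf sum_subtractf[symmetric] algebra_simps)
qed

lemma acyclic_rank:
  assumes "\<And>x y. (x, y) \<in> G \<Longrightarrow> (r x :: nat) < r y"
  shows "acyclic G"
proof -
  have "(x, y) \<in> G\<^sup>+ \<Longrightarrow> r x < r y" for x y
    by (induction rule: trancl_induct) (auto dest: assms)
  then show ?thesis unfolding acyclic_def by blast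
qed

lemma pa_sub: "G \<in> DAGs N \<Longrightarrow> pa G a \<subseteq> N - {a}"
  unfolding DAGs_def pa_def acyclic_def by (auto dest: r_into_trancl)

lemma Ups_Sigma: "Ups N = Sigma N (\<lambda>a. {B. B \<noteq> {} \<and> B \<subseteq> N - {a}})"
  unfolding Ups_def by auto

lemma finite_Ups: "finite N \<Longrightarrow> finite (Ups N)"
  unfolding Ups_Sigma by (rule finite_SigmaI) (auto intro: finite_subset[of _ "Pow N"])

lemma ipU_eta:
  assumes "finite N" "G \<in> DAGs N"
  shows "ipU N ob (eta N G) = (\<Sum>x\<in>N. fo ob x (pa G x))"
proof -
  have "ipU N ob (eta N G) = (\<Sum>x\<in>N. \<Sum>B\<in>{B. B \<noteq> {} \<and> B \<subseteq> N - {x}}. ob (x, B) * eta N G (x, B))"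
    unfolding ipU_def Ups_Sigma
    by (subst sum.Sigma) (auto simp: assms split_def intro: finite_subset[of _ "Pow N"])
  also have "\<dots> = (\<Sum>x\<in>N. fo ob x (pa G x))"
  proof (rule sum.cong)
    fix x assume x: "x \<in> N"
    have "(\<Sum>B\<in>{B. B \<noteq> {} \<and> B \<subseteq> N - {x}}. ob (x, B) * eta N G (x, B))
        = (\<Sum>B\<in>{B. B \<noteq> {} \<and> B \<subseteq> N - {x}}. if B = pa G x then ob (x, B) else 0)"
      by (rule sum.cong) (auto simp: eta_def Ups_def x)
    also have "\<dots> = fo ob x (pa G x)"
    proof -
      have fin: "finite {B. B \<noteq> {} \<and> B \<subseteq> N - {x}}" using assms by (auto intro: finite_subset[of _ "Pow N"])
      show ?thesis using pa_sub[OF assms(2), of x] by (simp add: fo_def sum.delta[OF fin])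
    qed
    finally show "(\<Sum>B\<in>{B. B \<noteq> {} \<and> B \<subseteq> N - {x}}. ob (x, B) * eta N G (x, B)) = fo ob x (pa G x)" .
  qed simp
  finally show ?thesis .
qed



lemma covered_edge:
  assumes fin: "finite N" and se: "SE_objective N ob" and a: "a \<in> N" and b: "b \<in> N" and ab: "a \<noteq> b"
    and C: "C \<subseteq> N - {a, b}"
  shows "fo ob a C + fo ob b (insert a C) = fo ob a (insert b C) + fo ob b C"
proof -
  define G where "G = C \<times> {a} \<union> C \<times> {b} \<union> {(a, b)}"
  define H where "H = C \<times> {a} \<union> C \<times> {b} \<union> {(b, a)}"
  have aC: "a \<notin> C" and bC: "b \<notin> C" using C by auto
  have GD: "G \<in> DAGs N"
    unfolding DAGs_def
  proof (intro CollectI conjI)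
    show "G \<subseteq> N \<times> N" using C a b by (auto simp: G_def)
    show "acyclic G"
      by (rule acyclic_rank[where r = "\<lambda>x. if x = a then 1 else if x = b then 2 else 0"])
         (use aC bC ab in \<open>auto simp: G_def\<close>)
  qed
  have HD: "H \<in> DAGs N"
    unfolding DAGs_def
  proof (intro CollectI conjI)
    show "H \<subseteq> N \<times> N" using C a b by (auto simp: H_def)
    show "acyclic H"
      by (rule acyclic_rank[where r = "\<lambda>x. if x = b then 1 else if x = a then 2 else 0"])
         (use aC bC ab in \<open>auto simp: H_def\<close>)
  qed
  have adjeq: "adj G x y = adj H x y" for x y by (auto simp: adj_def G_def H_def)
  have "immorality G x c y = immorality H x c y" for x c y
    using aC bC ab by (auto simp: immorality_def adj_def G_def H_def)
  then have me: "markov_equiv G H" using adjeq by (simp add: markov_equiv_def)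
  have eq: "ipU N ob (eta N G) = ipU N ob (eta N H)"
    using se GD HD me unfolding SE_objective_def by blast
  have paG: "pa G x = (if x = a then C else if x = b then insert a C else {})" for x
    using aC bC ab by (auto simp: pa_def G_def)
  have paH: "pa H x = (if x = a then insert b C else if x = b then C else {})" for x
    using aC bC ab by (auto simp: pa_def H_def)
  have s: "(\<Sum>x\<in>N. h x) = h a + h b" if "\<And>x. x \<notin> {a, b} \<Longrightarrow> h x = 0" for h :: "'a \<Rightarrow> real"
  proof -
    have "(\<Sum>x\<in>N. h x) = (\<Sum>x\<in>{a,b}. h x)"
      by (rule sum.mono_neutral_cong_right) (use fin a b that in auto)
    then show ?thesis using ab by simp
  qed
  have "ipU N ob (eta N G) = fo ob a C + fo ob b (insert a C)"
    unfolding ipU_eta[OF fin GD] by (subst s) (use ab in \<open>auto simp: paG fo_def\<close>)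
  moreover have "ipU N ob (eta N H) = fo ob a (insert b C) + fo ob b C"
    unfolding ipU_eta[OF fin HD] by (subst s) (use ab in \<open>auto simp: paH fo_def\<close>)
  ultimately show ?thesis using eq by simp
qed

lemma indep:
  assumes fin: "finite N" and se: "SE_objective N ob" and T: "T \<subseteq> N" and a: "a \<in> T" and b: "b \<in> T"
  shows "mo ob a (T - {a}) = mo ob b (T - {b})"
proof (cases "a = b")
  case False
  define R where "R = T - {a, b}"
  have fR: "finite R" using fin T finite_subset R_def by blast
  have e1: "T - {a} = insert b R" and e2: "T - {b} = insert a R" using a b False by (auto simp: R_def)
  have "mo ob a (T - {a}) = (\<Sum>L\<in>Pow R. (-1) ^ (card R - card L) * (fo ob a (insert b L) - fo ob a L))"
    unfolding e1 by (rule split_mo[OF fR]) (simp add: R_def)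
  also have "\<dots> = (\<Sum>L\<in>Pow R. (-1) ^ (card R - card L) * (fo ob b (insert a L) - fo ob b L))"
  proof (rule sum.cong)
    fix L assume "L \<in> Pow R"
    then have LN: "L \<subseteq> N - {a, b}" using T by (auto simp: R_def)
    have aN: "a \<in> N" and bN: "b \<in> N" using a b T by auto
    from covered_edge[OF fin se aN bN False LN]
    show "(-1) ^ (card R - card L) * (fo ob a (insert b L) - fo ob a L) =
          (-1) ^ (card R - card L) * (fo ob b (insert a L) - fo ob b L)" by simp
  qed simp
  also have "\<dots> = mo ob b (T - {b})"
    unfolding e2 by (rule split_mo[OF fR, symmetric]) (simp add: R_def)
  finally show ?thesis .
qed simp



lemma sum_if_sub: "finite A \<Longrightarrow> S \<subseteq> A \<Longrightarrow> (\<Sum>x\<in>A. if x \<in> S then f x else 0) = (\<Sum>x\<in>S. f x)"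
  by (rule sum.mono_neutral_cong_right) auto

lemma Ssets_sub: "T \<in> Ssets N \<Longrightarrow> T \<subseteq> N" by (simp add: Ssets_def)

lemma finite_Ssets: "finite N \<Longrightarrow> finite (Ssets N)"
  unfolding Ssets_def by (rule finite_subset[of _ "Pow N"]) auto

lemma Ssets_not_single: "T \<in> Ssets N \<Longrightarrow> T - {a} \<subseteq> {} \<Longrightarrow> False"
proof -
  assume T: "T \<in> Ssets N" and s: "T - {a} \<subseteq> {}"
  then have "T \<subseteq> {a}" by auto
  then have "card T \<le> 1" using card_mono[of "{a}" T] by simp
  with T show False by (simp add: Ssets_def)
qed

lemma swapL:
  fixes h :: "'a set \<Rightarrow> 'a \<Rightarrow> real" and v :: "'a \<times> 'a set \<Rightarrow> real"
  assumes fin: "finite N"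
  shows "(\<Sum>T\<in>Ssets N. \<Sum>a\<in>T. \<Sum>B\<in>{B. T - {a} \<subseteq> B \<and> B \<subseteq> N - {a}}. h T a * v (a, B))
   = (\<Sum>p\<in>Ups N. v p * (\<Sum>T\<in>Ssets N. if fst p \<in> T \<and> T - {fst p} \<subseteq> snd p then h T (fst p) else 0))"
proof -
  define g where "g T a B = (if a \<in> T \<and> T - {a} \<subseteq> B \<and> B \<subseteq> N - {a} then h T a * v (a, B) else 0)" for T a B
  have finP: "finite (Pow N)" using fin by simp
  have step1: "(\<Sum>a\<in>T. \<Sum>B\<in>{B. T - {a} \<subseteq> B \<and> B \<subseteq> N - {a}}. h T a * v (a, B))
      = (\<Sum>a\<in>N. \<Sum>B\<in>Pow N. g T a B)" if T: "T \<in> Ssets N" for T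
  proof -
    have "(\<Sum>B\<in>Pow N. g T a B) = (if a \<in> T then (\<Sum>B\<in>{B. T - {a} \<subseteq> B \<and> B \<subseteq> N - {a}}. h T a * v (a, B)) else 0)"
      if a: "a \<in> N" for a
    proof (cases "a \<in> T")
      case True
      have "(\<Sum>B\<in>Pow N. g T a B) = (\<Sum>B\<in>Pow N. if B \<in> {B. T - {a} \<subseteq> B \<and> B \<subseteq> N - {a}} then h T a * v (a, B) else 0)"
        by (rule sum.cong) (auto simp: g_def True)
      also have "\<dots> = (\<Sum>B\<in>{B. T - {a} \<subseteq> B \<and> B \<subseteq> N - {a}}. h T a * v (a, B))"
        by (rule sum_if_sub[OF finP]) auto
      finally show ?thesis using True by simp
    qed (simp add: g_def)
    then have "(\<Sum>a\<in>N. \<Sum>B\<in>Pow N. g T a B) = (\<Sum>a\<in>N. if a \<in> T then (\<Sum>B\<in>{B. T - {a} \<subseteq> B \<and> B \<subseteq> N - {a}}. h T a * v (a, B)) else 0)"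
      by (rule sum.cong[OF refl])
    also have "\<dots> = (\<Sum>a\<in>T. \<Sum>B\<in>{B. T - {a} \<subseteq> B \<and> B \<subseteq> N - {a}}. h T a * v (a, B))"
      by (rule sum_if_sub[OF fin Ssets_sub[OF T]])
    finally show ?thesis by simp
  qed
  have "(\<Sum>T\<in>Ssets N. \<Sum>a\<in>T. \<Sum>B\<in>{B. T - {a} \<subseteq> B \<and> B \<subseteq> N - {a}}. h T a * v (a, B))
      = (\<Sum>T\<in>Ssets N. \<Sum>a\<in>N. \<Sum>B\<in>Pow N. g T a B)"
    by (rule sum.cong[OF refl]) (rule step1)
  also have "\<dots> = (\<Sum>a\<in>N. \<Sum>T\<in>Ssets N. \<Sum>B\<in>Pow N. g T a B)"
    by (rule sum.swap)
  also have "\<dots> = (\<Sum>a\<in>N. \<Sum>B\<in>Pow N. \<Sum>T\<in>Ssets N. g T a B)"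
    by (rule sum.cong[OF refl], rule sum.swap)
  also have "\<dots> = (\<Sum>a\<in>N. \<Sum>B\<in>Pow N. if B \<in> {B. B \<noteq> {} \<and> B \<subseteq> N - {a}} then
        v (a, B) * (\<Sum>T\<in>Ssets N. if a \<in> T \<and> T - {a} \<subseteq> B then h T a else 0) else 0)"
  proof (intro sum.cong refl)
    fix a B assume a: "a \<in> N" and B: "B \<in> Pow N"
    show "(\<Sum>T\<in>Ssets N. g T a B) = (if B \<in> {B. B \<noteq> {} \<and> B \<subseteq> N - {a}} then
        v (a, B) * (\<Sum>T\<in>Ssets N. if a \<in> T \<and> T - {a} \<subseteq> B then h T a else 0) else 0)"
    proof (cases "B \<subseteq> N - {a}")
      case True
      show ?thesis
      proof (cases "B = {}")
        case True
        have "g T a B = 0" if "T \<in> Ssets N" for T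
          using Ssets_not_single[OF that, of a] True by (auto simp: g_def)
        then show ?thesis using True by simp
      next
        case False
        have "(\<Sum>T\<in>Ssets N. g T a B) = (\<Sum>T\<in>Ssets N. v (a, B) * (if a \<in> T \<and> T - {a} \<subseteq> B then h T a else 0))"
          by (rule sum.cong) (use \<open>B \<subseteq> N - {a}\<close> in \<open>auto simp: g_def\<close>)
        then show ?thesis using False \<open>B \<subseteq> N - {a}\<close> by (simp add: sum_distrib_left)
      qed
    qed (simp add: g_def)
  qed
  also have "\<dots> = (\<Sum>a\<in>N. \<Sum>B\<in>{B. B \<noteq> {} \<and> B \<subseteq> N - {a}}.
        v (a, B) * (\<Sum>T\<in>Ssets N. if a \<in> T \<and> T - {a} \<subseteq> B then h T a else 0))"
    by (rule sum.cong[OF refl], rule sum_if_sub[OF finP]) auto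
  also have "\<dots> = (\<Sum>p\<in>Ups N. v p * (\<Sum>T\<in>Ssets N. if fst p \<in> T \<and> T - {fst p} \<subseteq> snd p then h T (fst p) else 0))"
    unfolding Ups_Sigma
    by (subst sum.Sigma) (auto simp: fin split_def intro: finite_subset[of _ "Pow N"])
  finally show ?thesis .
qed

definition obt :: "'a set \<Rightarrow> ('a set \<Rightarrow> real) \<Rightarrow> 'a \<times> 'a set \<Rightarrow> real" where
  "obt N t p = (\<Sum>T\<in>Ssets N. if fst p \<in> T \<and> T - {fst p} \<subseteq> snd p then t T else 0)"

lemma ipS_c:
  assumes fin: "finite N"
  shows "ipS N t (c_eta N v) = ipU N (obt N t) v"
proof -
  have "ipS N t (c_eta N v) = (\<Sum>T\<in>Ssets N. \<Sum>a\<in>T. \<Sum>B\<in>{B. T - {a} \<subseteq> B \<and> B \<subseteq> N - {a}}. t T * v (a, B))"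
    unfolding ipS_def c_eta_def by (auto simp: sum_distrib_left intro!: sum.cong)
  also have "\<dots> = ipU N (obt N t) v"
    unfolding swapL[OF fin, of "\<lambda>T a. t T" v] ipU_def obt_def by (simp add: mult.commute)
  finally show ?thesis .
qed

lemma obt_tau:
  assumes fin: "finite N" and se: "SE_objective N ob" and p: "p \<in> Ups N"
  shows "obt N (tau ob) p = ob p"
proof -
  obtain a B where pab: "p = (a, B)" and a: "a \<in> N" and Bne: "B \<noteq> {}" and BN: "B \<subseteq> N - {a}"
    using p by (auto simp: Ups_def)
  have finB: "finite B" using BN fin finite_subset by blast
  have tauT: "tau ob T = mo ob a (T - {a})" if T: "T \<in> Ssets N" "a \<in> T" for T
  proof -
    have fT: "finite T" using T fin finite_subset Ssets_sub by blast
    have "(SOME b. b \<in> T) \<in> T" using T(2) by (rule someI)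
    then show ?thesis unfolding tau_mo[OF fT]
      by (rule indep[OF fin se Ssets_sub[OF T(1)] _ T(2)])
  qed
  have "obt N (tau ob) p = (\<Sum>T\<in>{T\<in>Ssets N. a \<in> T \<and> T - {a} \<subseteq> B}. mo ob a (T - {a}))"
    unfolding obt_def pab fst_conv snd_conv
    by (subst sum.inter_filter[OF finite_Ssets[OF fin]]) (auto intro!: sum.cong simp: tauT)
  also have "\<dots> = (\<Sum>K\<in>{K. K \<noteq> {} \<and> K \<subseteq> B}. mo ob a K)"
  proof (rule sum.reindex_bij_witness[where i = "insert a" and j = "\<lambda>T. T - {a}"])
    fix K assume K: "K \<in> {K. K \<noteq> {} \<and> K \<subseteq> B}"
    then have aK: "a \<notin> K" using BN by auto
    have fK: "finite K" using K finB finite_subset by auto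
    then have "card K \<ge> 1" using K by (simp add: Suc_leI card_gt_0_iff)
    then have "card (insert a K) \<ge> 2" using fK aK by simp
    then show "insert a K \<in> {T\<in>Ssets N. a \<in> T \<and> T - {a} \<subseteq> B}"
      using K BN a by (auto simp: Ssets_def)
    show "insert a K - {a} = K" using aK by auto
  next
    fix T assume T: "T \<in> {T\<in>Ssets N. a \<in> T \<and> T - {a} \<subseteq> B}"
    then show "insert a (T - {a}) = T" by auto
    show "T - {a} \<in> {K. K \<noteq> {} \<and> K \<subseteq> B}" using T Ssets_not_single[of T N a] by auto
    show "mo ob a (T - {a}) = mo ob a (T - {a})" by simp
  qed
  also have "\<dots> = (\<Sum>K\<in>Pow B. mo ob a K)"
    by (rule sum.mono_neutral_left) (auto simp: finB mo_def fo_def)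
  also have "\<dots> = ob p" using mobius[OF finB] Bne by (simp add: fo_def pab)
  finally show ?thesis .
qed

lemma ipU_tau:
  assumes fin: "finite N" and se: "SE_objective N ob"
  shows "ipU N ob v = ipS N (tau ob) (c_eta N v)"
  unfolding ipS_c[OF fin] ipU_def by (auto simp: obt_tau[OF fin se] intro!: sum.cong)



lemma two_cycle: "G \<in> DAGs N \<Longrightarrow> (x, y) \<in> G \<Longrightarrow> (y, x) \<in> G \<Longrightarrow> False"
proof -
  assume "G \<in> DAGs N" "(x, y) \<in> G" "(y, x) \<in> G"
  then have "(x, x) \<in> G\<^sup>+" "acyclic G" by (auto simp: DAGs_def intro: trancl_into_trancl r_into_trancl)
  then show False by (simp add: acyclic_def)
qed

lemma three_cycle: "G \<in> DAGs N \<Longrightarrow> (x, y) \<in> G \<Longrightarrow> (y, z) \<in> G \<Longrightarrow> (z, x) \<in> G \<Longrightarrow> False"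
proof -
  assume "G \<in> DAGs N" "(x, y) \<in> G" "(y, z) \<in> G" "(z, x) \<in> G"
  then have "(x, x) \<in> G\<^sup>+" "acyclic G" by (auto simp: DAGs_def intro: trancl_into_trancl r_into_trancl)
  then show False by (simp add: acyclic_def)
qed

lemma cG_val:
  assumes fin: "finite N" and G: "G \<in> DAGs N" and S: "S \<in> Ssets N"
  shows "cG N G S = (if \<exists>a\<in>S. S - {a} \<subseteq> pa G a then 1 else 0)"
proof -
  have SN: "S \<subseteq> N" using S by (simp add: Ssets_def)
  have fS: "finite S" using SN fin finite_subset by blast
  have inner: "(\<Sum>B\<in>{B. S - {a} \<subseteq> B \<and> B \<subseteq> N - {a}}. eta N G (a, B)) = (if S - {a} \<subseteq> pa G a then 1 else 0)"
    if a: "a \<in> S" for a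
  proof -
    have finX: "finite {B. S - {a} \<subseteq> B \<and> B \<subseteq> N - {a}}" using fin by (auto intro: finite_subset[of _ "Pow N"])
    have "(\<Sum>B\<in>{B. S - {a} \<subseteq> B \<and> B \<subseteq> N - {a}}. eta N G (a, B))
        = (\<Sum>B\<in>{B. S - {a} \<subseteq> B \<and> B \<subseteq> N - {a}}. if B = pa G a then 1 else 0)"
    proof (rule sum.cong)
      fix B assume B: "B \<in> {B. S - {a} \<subseteq> B \<and> B \<subseteq> N - {a}}"
      have "B \<noteq> {}" using B Ssets_not_single[OF S, of a] by auto
      then have "(a, B) \<in> Ups N" using B a SN by (auto simp: Ups_def)
      then show "eta N G (a, B) = (if B = pa G a then 1 else 0)" by (simp add: eta_def)
    qed simp
    also have "\<dots> = (if S - {a} \<subseteq> pa G a then 1 else 0)"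
      using pa_sub[OF G, of a] by (simp add: sum.delta[OF finX])
    finally show ?thesis .
  qed
  have "cG N G S = (\<Sum>a\<in>S. if S - {a} \<subseteq> pa G a then 1 else 0)"
    unfolding cG_def c_eta_def using S inner by simp
  also have "\<dots> = (if \<exists>a\<in>S. S - {a} \<subseteq> pa G a then 1 else 0)"
  proof (cases "\<exists>a\<in>S. S - {a} \<subseteq> pa G a")
    case True
    then obtain a0 where a0: "a0 \<in> S" "S - {a0} \<subseteq> pa G a0" by blast
    have "(S - {a} \<subseteq> pa G a) = (a = a0)" if a: "a \<in> S" for a
    proof
      assume h: "S - {a} \<subseteq> pa G a"
      show "a = a0"
      proof (rule ccontr)
        assume "a \<noteq> a0"
        then have "(a0, a) \<in> G" "(a, a0) \<in> G" using h a0 a by (auto simp: pa_def)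
        then show False using two_cycle[OF G] by blast
      qed
    qed (use a0 in simp)
    then have "(\<Sum>a\<in>S. if S - {a} \<subseteq> pa G a then 1 else 0) = (\<Sum>a\<in>S. if a = a0 then 1 else (0::real))"
      by (intro sum.cong) auto
    then show ?thesis using True a0 fS by simp
  qed simp
  finally show ?thesis .
qed

lemma exist_inv:
  assumes fin: "finite N" and G: "G \<in> DAGs N" and H: "H \<in> DAGs N" and me: "markov_equiv G H"
    and S: "S \<subseteq> N" and a: "a \<in> S" and sub: "S - {a} \<subseteq> pa G a"
  shows "\<exists>s\<in>S. S - {s} \<subseteq> pa H s"
proof -
  have adjeq: "adj G x y = adj H x y" for x y using me by (simp add: markov_equiv_def)
  have imeq: "immorality G x c y = immorality H x c y" for x c y using me by (simp add: markov_equiv_def)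
  define A where "A = S - {a}"
  define D where "D = {x\<in>A. (a, x) \<in> H}"
  have adjA: "adj H x a" if "x \<in> A" for x
    using that sub adjeq[of x a] by (auto simp: A_def adj_def pa_def)
  show ?thesis
  proof (cases "D = {}")
    case True
    have "S - {a} \<subseteq> pa H a"
    proof
      fix x assume "x \<in> S - {a}"
      then have "x \<in> A" "x \<notin> D" using True by (auto simp: A_def)
      then show "x \<in> pa H a" using adjA[of x] by (auto simp: D_def adj_def pa_def)
    qed
    then show ?thesis using a by blast
  next
    case False
    have finH: "finite H" using H fin unfolding DAGs_def by (auto intro: finite_subset[of _ "N \<times> N"])
    have acH: "acyclic H" using H by (simp add: DAGs_def)
    have "wf (H\<inverse>)" by (rule finite_acyclic_wf_converse[OF finH acH])
    then obtain s where s: "s \<in> D" and sink: "\<And>y. (s, y) \<in> H \<Longrightarrow> y \<notin> D"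
      using False unfolding wf_eq_minimal by (metis converse_iff equals0I)
    have claim: "adj H x y" if x: "x \<in> D" and y: "y \<in> A" and xy: "x \<noteq> y" for x y
    proof (rule ccontr)
      assume na: "\<not> adj H x y"
      have "x \<in> pa G a" "y \<in> pa G a" using x y sub by (auto simp: D_def A_def)
      then have "immorality G x a y" using na adjeq[of x y] xy by (simp add: immorality_def pa_def)
      then have "(x, a) \<in> H" using imeq by (simp add: immorality_def)
      moreover have "(a, x) \<in> H" using x by (simp add: D_def)
      ultimately show False using two_cycle[OF H] by blast
    qed
    have "S - {s} \<subseteq> pa H s"
    proof
      fix y assume y: "y \<in> S - {s}"
      show "y \<in> pa H s"
      proof (cases "y = a")
        case True then show ?thesis using s by (simp add: D_def pa_def)
      next
        case ya: False
        then have yA: "y \<in> A" using y by (simp add: A_def)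
        have sy: "adj H s y" using claim[OF s yA] y by auto
        show ?thesis
        proof (cases "y \<in> D")
          case True
          then have "(s, y) \<notin> H" using sink by blast
          then show ?thesis using sy by (simp add: adj_def pa_def)
        next
          case False
          then have "(a, y) \<notin> H" using yA by (simp add: D_def)
          then have "(y, a) \<in> H" using adjA[OF yA] by (simp add: adj_def)
          moreover have "(a, s) \<in> H" using s by (simp add: D_def)
          ultimately have "(s, y) \<notin> H" using three_cycle[OF H] by blast
          then show ?thesis using sy by (simp add: adj_def pa_def)
        qed
      qed
    qed
    moreover have "s \<in> S" using s by (simp add: D_def A_def)
    ultimately show ?thesis by blast
  qed
qed

lemma cG_eq:
  assumes fin: "finite N" and G: "G \<in> DAGs N" and H: "H \<in> DAGs N" and me: "markov_equiv G H"
  shows "cG N G = cG N H"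
proof
  fix S
  show "cG N G S = cG N H S"
  proof (cases "S \<in> Ssets N")
    case True
    have me': "markov_equiv H G" using me by (simp add: markov_equiv_def)
    have SN: "S \<subseteq> N" using True by (simp add: Ssets_def)
    have "(\<exists>a\<in>S. S - {a} \<subseteq> pa G a) = (\<exists>a\<in>S. S - {a} \<subseteq> pa H a)"
      using exist_inv[OF fin G H me SN] exist_inv[OF fin H G me' SN] by blast
    then show ?thesis using cG_val[OF fin G True] cG_val[OF fin H True] by simp
  next
    case False
    then show ?thesis by (simp add: cG_def c_eta_def)
  qed
qed

lemma obt_SE:
  assumes fin: "finite N"
  shows "SE_objective N (obt N t)"
  unfolding SE_objective_def
proof (intro ballI impI)
  fix G H assume G: "G \<in> DAGs N" and H: "H \<in> DAGs N" and me: "markov_equiv G H"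
  show "ipU N (obt N t) (eta N G) = ipU N (obt N t) (eta N H)"
    unfolding ipS_c[OF fin, symmetric] using cG_eq[OF fin G H me] by (simp add: cG_def)
qed



lemma conv_image:
  fixes F :: "('i \<Rightarrow> real) \<Rightarrow> ('j \<Rightarrow> real)"
  assumes finV: "finite V" and lin: "\<And>w. F (\<lambda>i. \<Sum>v\<in>V. w v * v i) = (\<lambda>j. \<Sum>v\<in>V. w v * F v j)"
  shows "F ` conv V = conv (F ` V)"
proof
  show "F ` conv V \<subseteq> conv (F ` V)"
  proof
    fix y assume "y \<in> F ` conv V"
    then obtain w where w0: "\<forall>v\<in>V. w v \<ge> 0" and w1: "(\<Sum>v\<in>V. w v) = 1"
      and y: "y = F (\<lambda>i. \<Sum>v\<in>V. w v * v i)" by (auto simp: conv_def)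
    define w' where "w' c = (\<Sum>v\<in>{v\<in>V. F v = c}. w v)" for c
    have "\<forall>c\<in>F ` V. w' c \<ge> 0" using w0 by (auto simp: w'_def intro: sum_nonneg)
    moreover have "(\<Sum>c\<in>F ` V. w' c) = 1"
      using w1 sum.image_gen[OF finV, of w F] by (simp add: w'_def)
    moreover have "y = (\<lambda>j. \<Sum>c\<in>F ` V. w' c * c j)"
    proof
      fix j
      have "y j = (\<Sum>v\<in>V. w v * F v j)" using y lin by simp
      also have "\<dots> = (\<Sum>c\<in>F ` V. \<Sum>v\<in>{v\<in>V. F v = c}. w v * F v j)"
        by (rule sum.image_gen[OF finV])
      also have "\<dots> = (\<Sum>c\<in>F ` V. w' c * c j)"
        unfolding w'_def sum_distrib_right by (intro sum.cong refl) auto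
      finally show "y j = (\<Sum>c\<in>F ` V. w' c * c j)" .
    qed
    ultimately show "y \<in> conv (F ` V)" unfolding conv_def by blast
  qed
next
  show "conv (F ` V) \<subseteq> F ` conv V"
  proof
    fix y assume "y \<in> conv (F ` V)"
    then obtain w' where w0: "\<forall>c\<in>F ` V. w' c \<ge> 0" and w1: "(\<Sum>c\<in>F ` V. w' c) = 1"
      and y: "y = (\<lambda>j. \<Sum>c\<in>F ` V. w' c * c j)" by (auto simp: conv_def)
    define r where "r c = inv_into V F c" for c
    define w where "w v = (if v = r (F v) then w' (F v) else 0)" for v
    have key: "(\<Sum>v\<in>{v\<in>V. F v = c}. w v * g v) = w' c * g (r c)" if c: "c \<in> F ` V" for c g
    proof -
      have rc: "r c \<in> V" "F (r c) = c" using c by (auto simp: r_def inv_into_into f_inv_into_f)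
      have fin2: "finite {v\<in>V. F v = c}" using finV by simp
      have "(\<Sum>v\<in>{v\<in>V. F v = c}. w v * g v) = (\<Sum>v\<in>{v\<in>V. F v = c}. if v = r c then w' c * g v else 0)"
        by (rule sum.cong) (auto simp: w_def)
      also have "\<dots> = w' c * g (r c)" using rc by (simp add: sum.delta[OF fin2])
      finally show ?thesis .
    qed
    have "\<forall>v\<in>V. w v \<ge> 0" using w0 by (auto simp: w_def)
    moreover have "(\<Sum>v\<in>V. w v) = 1"
    proof -
      have "(\<Sum>v\<in>V. w v) = (\<Sum>c\<in>F ` V. \<Sum>v\<in>{v\<in>V. F v = c}. w v * 1)"
        using sum.image_gen[OF finV, of w F] by simp
      also have "\<dots> = (\<Sum>c\<in>F ` V. w' c)"
      proof (rule sum.cong[OF refl])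
        fix c assume "c \<in> F ` V"
        from key[OF this, of "\<lambda>_. 1"] show "(\<Sum>v\<in>{v\<in>V. F v = c}. w v * 1) = w' c" by simp
      qed
      finally show ?thesis using w1 by simp
    qed
    moreover have "y = F (\<lambda>i. \<Sum>v\<in>V. w v * v i)"
    proof -
      have "(\<lambda>j. \<Sum>v\<in>V. w v * F v j) = y"
      proof
        fix j
        have "(\<Sum>v\<in>V. w v * F v j) = (\<Sum>c\<in>F ` V. \<Sum>v\<in>{v\<in>V. F v = c}. w v * F v j)"
          by (rule sum.image_gen[OF finV])
        also have "\<dots> = (\<Sum>c\<in>F ` V. w' c * c j)"
        proof (rule sum.cong[OF refl])
          fix c assume c: "c \<in> F ` V"
          have "F (r c) = c" using c by (simp add: r_def f_inv_into_f)
          with key[OF c, of "\<lambda>v. F v j"]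
          show "(\<Sum>v\<in>{v\<in>V. F v = c}. w v * F v j) = w' c * c j" by simp
        qed
        finally show "(\<Sum>v\<in>V. w v * F v j) = y j" using y by simp
      qed
      then show ?thesis using lin by simp
    qed
    ultimately show "y \<in> F ` conv V" unfolding conv_def by blast
  qed
qed

lemma c_eta_lin: "c_eta N (\<lambda>i. \<Sum>v\<in>V. w v * v i) = (\<lambda>S. \<Sum>v\<in>V. w v * c_eta N v S)"
proof
  fix S
  show "c_eta N (\<lambda>i. \<Sum>v\<in>V. w v * v i) S = (\<Sum>v\<in>V. w v * c_eta N v S)"
  proof (cases "S \<in> Ssets N")
    case True
    have "(\<Sum>v\<in>V. w v * c_eta N v S) = (\<Sum>v\<in>V. \<Sum>a\<in>S. \<Sum>B\<in>{B. S - {a} \<subseteq> B \<and> B \<subseteq> N - {a}}. w v * v (a, B))"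
      using True by (simp add: c_eta_def sum_distrib_left)
    also have "\<dots> = (\<Sum>a\<in>S. \<Sum>v\<in>V. \<Sum>B\<in>{B. S - {a} \<subseteq> B \<and> B \<subseteq> N - {a}}. w v * v (a, B))"
      by (rule sum.swap)
    also have "\<dots> = (\<Sum>a\<in>S. \<Sum>B\<in>{B. S - {a} \<subseteq> B \<and> B \<subseteq> N - {a}}. \<Sum>v\<in>V. w v * v (a, B))"
      by (rule sum.cong[OF refl], rule sum.swap)
    finally show ?thesis using True by (simp add: c_eta_def)
  qed (simp add: c_eta_def)
qed

lemma finite_DAGs: "finite N \<Longrightarrow> finite (DAGs N)"
  unfolding DAGs_def by (rule finite_subset[of _ "Pow (N \<times> N)"]) auto

lemma PC: "finite N \<Longrightarrow> c_eta N ` P_poly N = C_poly N"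
  unfolding P_poly_def C_poly_def
  by (subst conv_image) (auto simp: finite_DAGs c_eta_lin image_image cG_def)

lemma vertex_conv:
  assumes fV: "finite V" and v: "v \<in> V"
  shows "v \<in> conv V"
proof -
  have "(\<lambda>i. \<Sum>x\<in>V. (if x = v then 1 else 0) * x i) = v"
  proof
    fix i
    have "(\<Sum>x\<in>V. (if x = v then 1 else 0) * x i) = (\<Sum>x\<in>V. if x = v then v i else 0)"
      by (rule sum.cong) auto
    also have "\<dots> = v i" using v by (simp add: sum.delta[OF fV])
    finally show "(\<Sum>x\<in>V. (if x = v then 1 else 0) * x i) = v i" .
  qed
  moreover have "(\<Sum>x\<in>V. (if x = v then 1 else 0::real)) = 1" using v by (simp add: sum.delta[OF fV])
  ultimately show ?thesis unfolding conv_def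
    by (intro CollectI exI[of _ "\<lambda>x. if x = v then 1 else 0"]) auto
qed

lemma face_corr:
  assumes fin: "finite N" and eq: "\<And>v. ipU N ob v = ipS N t (c_eta N v)"
  shows "c_eta N ` face_P N ob u = face_C N t u" and "valid_P N ob u \<longleftrightarrow> valid_C N t u"
proof -
  have PC': "x \<in> C_poly N \<longleftrightarrow> (\<exists>v\<in>P_poly N. x = c_eta N v)" for x
    using PC[OF fin] by blast
  show "c_eta N ` face_P N ob u = face_C N t u"
    unfolding face_P_def face_C_def using PC' eq by auto
  show "valid_P N ob u \<longleftrightarrow> valid_C N t u"
    unfolding valid_P_def valid_C_def using PC' eq by auto
qed

theorem corollary5:
  fixes N :: "'a set"
  assumes "finite N" and "card N \<ge> 2"
  shows "\<exists>\<Phi>. bij_betw \<Phi> {F. SE_face N F} {F. is_face_C N F}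
    \<and> (\<forall>F1 F2. SE_face N F1 \<longrightarrow> SE_face N F2 \<longrightarrow> (F1 \<subseteq> F2 \<longleftrightarrow> \<Phi> F1 \<subseteq> \<Phi> F2))
    \<and> (\<forall>ob u. SE_objective N ob \<and> valid_P N ob u \<longrightarrow>
          valid_C N (tau ob) u
        \<and> \<Phi> (face_P N ob u) = face_C N (tau ob) u
        \<and> {G\<in>DAGs N. eta N G \<in> face_P N ob u} = {G\<in>DAGs N. cG N G \<in> \<Phi> (face_P N ob u)})"
proof -
  note fin = assms(1)
  define \<Phi> where "\<Phi> F = c_eta N ` F" for F :: "('a \<times> 'a set \<Rightarrow> real) set"
  have incl: "F1 \<subseteq> F2 \<longleftrightarrow> \<Phi> F1 \<subseteq> \<Phi> F2" if F1: "SE_face N F1" and F2: "SE_face N F2" for F1 F2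
  proof
    assume "F1 \<subseteq> F2" then show "\<Phi> F1 \<subseteq> \<Phi> F2" by (auto simp: \<Phi>_def)
  next
    assume sub: "\<Phi> F1 \<subseteq> \<Phi> F2"
    obtain ob1 u1 where F1e: "F1 = face_P N ob1 u1" using F1 by (auto simp: SE_face_def)
    obtain ob2 u2 where se2: "SE_objective N ob2" and F2e: "F2 = face_P N ob2 u2" using F2 by (auto simp: SE_face_def)
    show "F1 \<subseteq> F2"
    proof
      fix v assume v: "v \<in> F1"
      then have vP: "v \<in> P_poly N" by (simp add: F1e face_P_def)
      have "c_eta N v \<in> \<Phi> F2" using sub v by (auto simp: \<Phi>_def)
      then obtain w where w: "w \<in> F2" "c_eta N v = c_eta N w" by (auto simp: \<Phi>_def)
      have "ipU N ob2 v = ipU N ob2 w" using w ipU_tau[OF fin se2] by simp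
      also have "\<dots> = u2" using w by (simp add: F2e face_P_def)
      finally show "v \<in> F2" using vP by (simp add: F2e face_P_def)
    qed
  qed
  have part3: "valid_C N (tau ob) u \<and> \<Phi> (face_P N ob u) = face_C N (tau ob) u
        \<and> {G\<in>DAGs N. eta N G \<in> face_P N ob u} = {G\<in>DAGs N. cG N G \<in> \<Phi> (face_P N ob u)}"
    if se: "SE_objective N ob" and va: "valid_P N ob u" for ob u
  proof -
    note fc = face_corr[OF fin ipU_tau[OF fin se], of u]
    have "G \<in> DAGs N \<Longrightarrow> eta N G \<in> face_P N ob u \<longleftrightarrow> cG N G \<in> face_C N (tau ob) u" for G
    proof -
      assume G: "G \<in> DAGs N"
      have "eta N G \<in> P_poly N" unfolding P_poly_def by (rule vertex_conv) (use G fin finite_DAGs in auto)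
      moreover have "cG N G \<in> C_poly N" unfolding C_poly_def by (rule vertex_conv) (use G fin finite_DAGs in auto)
      ultimately show ?thesis using ipU_tau[OF fin se, of "eta N G"]
        by (simp add: face_P_def face_C_def cG_def)
    qed
    then show ?thesis using fc va by (auto simp: \<Phi>_def)
  qed
  have img: "\<Phi> ` {F. SE_face N F} = {F. is_face_C N F}"
  proof
    show "\<Phi> ` {F. SE_face N F} \<subseteq> {F. is_face_C N F}"
    proof
      fix F assume "F \<in> \<Phi> ` {F. SE_face N F}"
      then obtain ob u where se: "SE_objective N ob" and va: "valid_P N ob u" and Fe: "F = \<Phi> (face_P N ob u)"
        by (auto simp: SE_face_def)
      then have "valid_C N (tau ob) u" "F = face_C N (tau ob) u" using part3 by auto
      then show "F \<in> {F. is_face_C N F}" by (auto simp: is_face_C_def)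
    qed
  next
    show "{F. is_face_C N F} \<subseteq> \<Phi> ` {F. SE_face N F}"
    proof
      fix F assume "F \<in> {F. is_face_C N F}"
      then obtain t u where vt: "valid_C N t u" and Fe: "F = face_C N t u" by (auto simp: is_face_C_def)
      have eqt: "\<And>v. ipU N (obt N t) v = ipS N t (c_eta N v)" using ipS_c[OF fin] by simp
      note fc = face_corr[OF fin eqt, of u]
      have "SE_face N (face_P N (obt N t) u)"
        unfolding SE_face_def using obt_SE[OF fin] fc(2) vt by blast
      moreover have "\<Phi> (face_P N (obt N t) u) = F" using fc(1) Fe by (simp add: \<Phi>_def)
      ultimately show "F \<in> \<Phi> ` {F. SE_face N F}" by blast
    qed
  qed
  have inj: "inj_on \<Phi> {F. SE_face N F}"
    by (rule inj_onI) (use incl in blast)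
  show ?thesis
    by (rule exI[of _ \<Phi>]) (use inj img incl part3 in \<open>auto simp: bij_betw_def\<close>)
qed

end
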